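(* Let $K\ge2$, $p\in(0,1)$, $M>0$, and let $f\in\mathcal M_p$ with $\sigma_f$ equal to the identity (so item $1$ is top-ranked). Then the output of \textsc{NE} with parameter $M$ satisfies $$\mathbb P(i_{\mathrm{out}}\neq 1)\le (2^{K-1}-1)\,p^M.$$
   Context: Items are $[K]=\{1,\dots,K\}$, and $\mathcal S=\{S\subseteq[K]:|S|\ge 2\}$. A preference $f$ is a family of numbers $f(i\mid S)$, $S\in\mathcal S$, $i\in[K]$. For $p\in(0,1)$, the $p$-Separable family $\mathcal M_p$ consists of all $f$ such that (i) $f(i\mid S)>0$ iff $i\in S$; (ii) $\sum_{i\in S}f(i\mid S)=1$ for all $S\in\mathcal S$; (iii) there is a bijection $\sigma_f:[K]\to[K]$ (the ranking; $\sigma_f(i)=k$ means item $i$ is in $k$-th highest position) such that for all $S\in\mathcal S$ and $i,i'\in S$ with $\sigma_f(i')<\sigma_f(i)$, $f(i\mid S)\le p\, f(i'\mid S)$. Interaction model: at each time $t=1,2,\dots$ a display set $S_t\in\mathcal S$ is chosen based on the past, and a choice $X_t\in S_t$ is observed, which conditionally on the past and $S_t$ has distribution $f(\cdot\mid S_t)$. Algorithm \textsc{NE} (Nested Elimination) with parameter $M>0$: set $W_0(i)=0$ for all $i\in[K]$, $S_{\mathrm{active}}=[K]$, $t=0$. While $|S_{\mathrm{active}}|>1$: set $t\leftarrow t+1$; display $S_{\mathrm{active}}$ and observe $X_t$; set $W_t(X_t)=W_{t-1}(X_t)+1$ and $W_t(i)=W_{t-1}(i)$ for $i\ne X_t$;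 let $\pi_t:[|S_{\mathrm{active}}|]\to S_{\mathrm{active}}$ be a bijection with $W_t(\pi_t(1))\ge W_t(\pi_t(2))\ge\cdots$ (ties broken arbitrarily); find the smallest $k\in\{1,\dots,|S_{\mathrm{active}}|-1\}$ with $\sum_{i=1}^kW_t(\pi_t(i))-k\,W_t(\pi_t(k+1))\ge M$, and if it exists set $S_{\mathrm{active}}\leftarrow\{\pi_t(1),\dots,\pi_t(k)\}$. The stopping time $\tau$ is the final value of $t$ and $i_{\mathrm{out}}$ is the unique element of the final $S_{\mathrm{active}}$. *)

theory Defs
  imports "HOL-Probability.Probability"
begin

definition display_sets :: "nat \<Rightarrow> nat set set" where
  "display_sets K = {S. S \<subseteq> {1..K} \<and> card S \<ge> 2}"

text \<open>f is in the p-Separable family M_p with ranking sigma.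
  f i S stands for f(i | S).\<close>
definition in_Mp_ranking :: "nat \<Rightarrow> real \<Rightarrow> (nat \<Rightarrow> nat set \<Rightarrow> real) \<Rightarrow> (nat \<Rightarrow> nat) \<Rightarrow> bool" where
  "in_Mp_ranking K p f \<sigma> \<longleftrightarrow>
     (\<forall>S\<in>display_sets K. (\<forall>i\<in>{1..K}. f i S > 0 \<longleftrightarrow> i \<in> S) \<and> (\<Sum>i\<in>S. f i S) = 1) \<and>
     bij_betw \<sigma> {1..K} {1..K} \<and>
     (\<forall>S\<in>display_sets K. \<forall>i\<in>S. \<forall>i'\<in>S. \<sigma> i' < \<sigma> i \<longrightarrow> f i S \<le> p * f i' S)"

definition in_Mp :: "nat \<Rightarrow> real \<Rightarrow> (nat \<Rightarrow> nat set \<Rightarrow> real) \<Rightarrow> bool" where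
  "in_Mp K p f \<longleftrightarrow> (\<exists>\<sigma>. in_Mp_ranking K p f \<sigma>)"

definition valid_tiebreak :: "((nat \<Rightarrow> nat) \<Rightarrow> nat set \<Rightarrow> nat list) \<Rightarrow> bool" where
  "valid_tiebreak rk \<longleftrightarrow> (\<forall>W S. finite S \<longrightarrow>
      distinct (rk W S) \<and> set (rk W S) = S \<and> sorted_wrt (\<lambda>a b. W a \<ge> W b) (rk W S))"

definition choice_pmf :: "(nat \<Rightarrow> nat set \<Rightarrow> real) \<Rightarrow> nat set \<Rightarrow> nat pmf" where
  "choice_pmf f S = embed_pmf (\<lambda>i. if i \<in> S then f i S else 0)"

text \<open>Elimination step: with L = [rk(1),...,rk(n)] (0-indexed list), find the smallest
  k in {1..n-1} with sum_{i=1}^k W(rk i) - k W(rk(k+1)) >= M; if it exists the new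
  active set is {rk 1,...,rk k}, otherwise unchanged.\<close>
definition ne_update :: "real \<Rightarrow> ((nat \<Rightarrow> nat) \<Rightarrow> nat set \<Rightarrow> nat list) \<Rightarrow> (nat \<Rightarrow> nat) \<Rightarrow> nat set \<Rightarrow> nat set" where
  "ne_update M rk W S =
     (let L = rk W S;
          ks = filter (\<lambda>k. (\<Sum>i<k. real (W (L ! i))) - real k * real (W (L ! k)) \<ge> M) [1..<length L]
      in if ks = [] then S else set (take (hd ks) L))"

text \<open>Nested Elimination run from win counts W and active set S; returns i_out.
  Its sub-probability distribution only records terminating runs.\<close>
partial_function (spmf) ne_run :: "real \<Rightarrow> ((nat \<Rightarrow> nat) \<Rightarrow> nat set \<Rightarrow> nat list) \<Rightarrow> (nat \<Rightarrow> nat set \<Rightarrow> real)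
    \<Rightarrow> (nat \<Rightarrow> nat) \<Rightarrow> nat set \<Rightarrow> nat spmf" where
  "ne_run M rk f W S =
     (if card S \<le> 1 then return_spmf (the_elem S)
      else bind_spmf (spmf_of_pmf (choice_pmf f S))
             (\<lambda>x. let W' = W(x := Suc (W x)) in ne_run M rk f W' (ne_update M rk W' S)))"

definition NE_output :: "real \<Rightarrow> ((nat \<Rightarrow> nat) \<Rightarrow> nat set \<Rightarrow> nat list) \<Rightarrow> (nat \<Rightarrow> nat set \<Rightarrow> real) \<Rightarrow> nat \<Rightarrow> nat spmf" where
  "NE_output M rk f K = ne_run M rk f (\<lambda>_. 0) {1..K}"

end

theory Submission
  imports Defs
begin

lemma adm_measure_le:
  "ccpo.admissible (fun_lub lub_spmf) (fun_ord (ord_spmf (=)))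
     (\<lambda>g. measure (measure_spmf (g x)) X \<le> (c::real))"
proof (rule ccpo.admissibleI)
  fix A :: "('a \<Rightarrow> 'b spmf) set"
  assume ch: "Complete_Partial_Order.chain (fun_ord (ord_spmf (=))) A" and ne: "A \<noteq> {}"
    and all: "\<forall>g\<in>A. measure (measure_spmf (g x)) X \<le> c"
  let ?Y = "{y. \<exists>g\<in>A. y = g x}"
  have chY: "Complete_Partial_Order.chain (ord_spmf (=)) ?Y" using chain_fun[OF ch] .
  have neY: "?Y \<noteq> {}" using ne by auto
  have "fun_lub lub_spmf A x = lub_spmf ?Y" by (simp add: fun_lub_def)
  hence "measure (measure_spmf (fun_lub lub_spmf A x)) X = (SUP y\<in>?Y. measure (measure_spmf y) X)"
    using measure_lub_spmf[OF chY] ne by fastforce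
  also have "\<dots> \<le> c" using all neY by (auto intro!: cSUP_least)
  finally show "measure (measure_spmf (fun_lub lub_spmf A x)) X \<le> c" .
qed

lemma chain_sum:
  fixes p :: real and f :: "nat \<Rightarrow> nat set \<Rightarrow> real"
  assumes p: "0 < p" "p < 1"
    and nonneg: "\<And>i. i \<in> S \<Longrightarrow> 0 \<le> f i S"
    and rank: "\<And>i i'. i \<in> S \<Longrightarrow> i' \<in> S \<Longrightarrow> i' < i \<Longrightarrow> f i S \<le> p * f i' S"
  shows "finite B \<Longrightarrow> card B = n \<Longrightarrow> B \<subseteq> S \<Longrightarrow> c \<in> S \<Longrightarrow> (\<forall>b\<in>B. c < b) \<Longrightarrow>
     (\<Sum>b\<in>B. f b S) \<le> f c S * p * (1 - p ^ n) / (1 - p)"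
proof (induction n arbitrary: B c)
  case 0
  then show ?case by simp
next
  case (Suc n)
  define b where "b = Min B"
  have Bne: "B \<noteq> {}" using Suc.prems by auto
  have bB: "b \<in> B" using Suc.prems Bne by (simp add: b_def)
  have bmin: "\<forall>x\<in>B - {b}. b < x"
  proof
    fix x assume x: "x \<in> B - {b}"
    hence "b \<le> x" using Suc.prems(1) unfolding b_def by (simp add: Min_le)
    thus "b < x" using x by auto
  qed
  have IH: "(\<Sum>x\<in>B - {b}. f x S) \<le> f b S * p * (1 - p ^ n) / (1 - p)"
    using Suc.prems bB bmin by (intro Suc.IH) auto
  have sumeq: "(\<Sum>x\<in>B. f x S) = f b S + (\<Sum>x\<in>B - {b}. f x S)"
    using Suc.prems bB by (simp add: sum.remove)
  have fb: "f b S \<le> p * f c S" using rank[of b c] Suc.prems bB by auto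
  have fb0: "0 \<le> f b S" using nonneg Suc.prems bB by auto
  have g0: "0 \<le> (1 - p ^ Suc n) / (1 - p)"
    using p power_le_one[of p "Suc n"] by (intro divide_nonneg_nonneg) auto
  have "(\<Sum>x\<in>B. f x S) \<le> f b S + f b S * p * (1 - p ^ n) / (1 - p)" using sumeq IH by simp
  also have "\<dots> = f b S * ((1 - p ^ Suc n) / (1 - p))" using p
    by (simp add: field_simps)
  also have "\<dots> \<le> (p * f c S) * ((1 - p ^ Suc n) / (1 - p))"
    using fb g0 by (rule mult_right_mono)
  also have "\<dots> = f c S * p * (1 - p ^ Suc n) / (1 - p)" by simp
  finally show ?case .
qed

definition Zv :: "nat set \<Rightarrow> (nat \<Rightarrow> nat) \<Rightarrow> real" where
  "Zv A W = (\<Sum>i\<in>A. real (W i)) - real (card A) * real (W 1)"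

lemma Zv_upd:
  assumes "finite A" "1 \<notin> A"
  shows "Zv A (W(x := Suc (W x))) = Zv A W + (if x \<in> A then 1 else 0) - (if x = 1 then real (card A) else 0)"
proof -
  have "(\<Sum>i\<in>A. real ((W(x := Suc (W x))) i)) = (\<Sum>i\<in>A. real (W i) + (if i = x then 1 else 0))"
    by (intro sum.cong) auto
  also have "\<dots> = (\<Sum>i\<in>A. real (W i)) + (if x \<in> A then 1 else 0)"
    using assms(1) by (simp add: sum.distrib)
  finally show ?thesis using assms unfolding Zv_def by (auto simp: algebra_simps)
qed

lemma Mp_facts:
  assumes "in_Mp_ranking K p f id" "S \<in> display_sets K"
  shows "\<And>i. i \<in> S \<Longrightarrow> 0 < f i S" "(\<Sum>i\<in>S. f i S) = 1"
    "\<And>i i'. i \<in> S \<Longrightarrow> i' \<in> S \<Longrightarrow> i' < i \<Longrightarrow> f i S \<le> p * f i' S"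
    "finite S" "S \<subseteq> {1..K}"
proof -
  have S: "S \<subseteq> {1..K}" "2 \<le> card S" using assms(2) unfolding display_sets_def by auto
  have A: "\<forall>i\<in>{1..K}. f i S > 0 \<longleftrightarrow> i \<in> S" "(\<Sum>i\<in>S. f i S) = 1"
     "\<forall>i\<in>S. \<forall>i'\<in>S. i' < i \<longrightarrow> f i S \<le> p * f i' S"
    using assms unfolding in_Mp_ranking_def by auto
  show "\<And>i. i \<in> S \<Longrightarrow> 0 < f i S" using A(1) S(1) by blast
  show "(\<Sum>i\<in>S. f i S) = 1" by (rule A(2))
  show "\<And>i i'. i \<in> S \<Longrightarrow> i' \<in> S \<Longrightarrow> i' < i \<Longrightarrow> f i S \<le> p * f i' S" using A(3) by simp
  show "finite S" using S(1) finite_subset by blast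
  show "S \<subseteq> {1..K}" by (rule S(1))
qed

lemma step_ineq:
  fixes p M :: real
  assumes p: "0 < p" "p < 1" and S: "S \<in> display_sets K" and S1: "1 \<in> S"
    and f: "in_Mp_ranking K p f id" and A: "A \<subseteq> {2..K}"
  shows "(\<Sum>x\<in>S. f x S * p powr (M - Zv A (W(x := Suc (W x))))) \<le> p powr (M - Zv A W)"
proof -
  note F = Mp_facts[OF f S]
  have finA: "finite A" using A finite_subset by blast
  have nA: "1 \<notin> A" using A by auto
  define m where "m = card A"
  define P where "P = p powr (M - Zv A W)"
  have P0: "0 \<le> P" unfolding P_def by simp
  have eq: "f x S * p powr (M - Zv A (W(x := Suc (W x)))) =
      P * (f x S + (if x \<in> A then f x S * (1/p - 1) else 0) + (if x = 1 then f x S * (p ^ m - 1) else 0))"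
    for x
  proof -
    have "p powr (M - Zv A (W(x := Suc (W x)))) = P * p powr (- ((if x \<in> A then 1 else 0) - (if x = 1 then real m else 0)))"
    proof -
      have e: "M - Zv A (W(x := Suc (W x))) = (M - Zv A W) + (- ((if x \<in> A then 1 else 0) - (if x = 1 then real m else 0)))"
        unfolding Zv_upd[OF finA nA] m_def by simp
      show ?thesis unfolding e powr_add P_def ..
    qed
    moreover have "p powr (- ((if x \<in> A then 1 else 0) - (if x = 1 then real m else 0))) =
       1 + (if x \<in> A then (1/p - 1) else 0) + (if x = 1 then (p ^ m - 1) else 0)"
      using p nA by (auto simp: powr_minus powr_realpow divide_inverse)
    ultimately show ?thesis by (simp add: algebra_simps)
  qed
  have "(\<Sum>x\<in>S. f x S * p powr (M - Zv A (W(x := Suc (W x))))) =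
     P * ((\<Sum>x\<in>S. f x S) + (\<Sum>x\<in>S. if x \<in> A then f x S * (1/p - 1) else 0)
          + (\<Sum>x\<in>S. if x = 1 then f x S * (p ^ m - 1) else 0))"
    by (simp add: eq sum_distrib_left[symmetric] sum.distrib)
  also have "(\<Sum>x\<in>S. if x \<in> A then f x S * (1/p - 1) else 0) = (\<Sum>x\<in>S \<inter> A. f x S) * (1/p - 1)"
  proof -
    have "(\<Sum>x\<in>S. if x \<in> A then f x S * (1/p - 1) else 0) = (\<Sum>x\<in>S. (if x \<in> A then f x S else 0) * (1/p - 1))"
      by (intro sum.cong) auto
    also have "\<dots> = (\<Sum>x\<in>S \<inter> A. f x S) * (1/p - 1)"
      using F(4) by (simp add: sum.inter_restrict sum_distrib_right)
    finally show ?thesis .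
  qed
  also have "(\<Sum>x\<in>S. if x = 1 then f x S * (p ^ m - 1) else 0) = f 1 S * (p ^ m - 1)"
    using F(4) S1 by simp
  finally have L: "(\<Sum>x\<in>S. f x S * p powr (M - Zv A (W(x := Suc (W x))))) =
     P * (1 + (\<Sum>x\<in>S \<inter> A. f x S) * (1/p - 1) + f 1 S * (p ^ m - 1))"
    unfolding F(2) .
  define a where "a = card (S \<inter> A)"
  define Fs where "Fs = (\<Sum>x\<in>S \<inter> A. f x S)"
  have chain: "Fs \<le> f 1 S * p * (1 - p ^ a) / (1 - p)"
    unfolding Fs_def a_def
    by (rule chain_sum[OF p, where S=S]) (use F S1 A finA in \<open>auto intro: less_imp_le\<close>)
  have am: "a \<le> m" unfolding a_def m_def using finA by (simp add: card_mono)
  have pm: "p ^ m \<le> p ^ a" using am p by (simp add: power_decreasing)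
  have f1: "0 \<le> f 1 S" using F(1) S1 by (simp add: less_imp_le)
  have "Fs * (1/p - 1) = Fs * ((1 - p) / p)" using p by (simp add: field_simps)
  also have "\<dots> \<le> (f 1 S * p * (1 - p ^ a) / (1 - p)) * ((1 - p) / p)"
    using chain p by (intro mult_right_mono) auto
  also have "\<dots> = f 1 S * (1 - p ^ a)" using p by (simp add: field_simps)
  also have "\<dots> \<le> f 1 S * (1 - p ^ m)" using pm f1 by (intro mult_left_mono) auto
  finally have "Fs * (1/p - 1) + f 1 S * (p ^ m - 1) \<le> 0" by (simp add: algebra_simps)
  hence "1 + Fs * (1/p - 1) + f 1 S * (p ^ m - 1) \<le> 1" by simp
  hence "P * (1 + Fs * (1/p - 1) + f 1 S * (p ^ m - 1)) \<le> P"
    using P0 by (simp add: mult_left_le)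
  thus ?thesis using L unfolding Fs_def P_def by simp
qed

lemma elim_lemma:
  assumes vt: "valid_tiebreak rk" and fin: "finite S" and S1: "1 \<in> S"
    and out: "1 \<notin> ne_update M rk W S"
  shows "\<exists>A. A \<subseteq> S - {1} \<and> A \<noteq> {} \<and> M \<le> Zv A W"
proof -
  define L where "L = rk W S"
  have Ld: "distinct L" and Ls: "set L = S" and Lsort: "sorted_wrt (\<lambda>a b. W a \<ge> W b) L"
    using vt fin unfolding valid_tiebreak_def L_def by auto
  define ks where "ks = filter (\<lambda>k. (\<Sum>i<k. real (W (L ! i))) - real k * real (W (L ! k)) \<ge> M) [1..<length L]"
  have upd: "ne_update M rk W S = (if ks = [] then S else set (take (hd ks) L))"
    unfolding ne_update_def ks_def L_def Let_def by simp
  have ksne: "ks \<noteq> []" using upd out S1 by auto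
  define k where "k = hd ks"
  have "k \<in> set ks" using ksne unfolding k_def by simp
  hence k1: "1 \<le> k" and kL: "k < length L"
    and cond: "(\<Sum>i<k. real (W (L ! i))) - real k * real (W (L ! k)) \<ge> M"
    unfolding ks_def by auto
  define A where "A = set (take k L)"
  have outA: "1 \<notin> A" using upd out ksne unfolding A_def k_def by simp
  have cardA: "card A = k" unfolding A_def using Ld kL by (simp add: distinct_card)
  have sumA: "(\<Sum>i\<in>A. real (W i)) = (\<Sum>i<k. real (W (L ! i)))"
  proof -
    have "(\<Sum>i\<in>A. real (W i)) = sum_list (map (\<lambda>i. real (W i)) (take k L))"
      unfolding A_def using Ld by (simp add: sum.distinct_set_conv_list)
    also have "\<dots> = (\<Sum>i<k. real (W (L ! i)))"
      using kL by (simp add: sum_list_sum_nth lessThan_atLeast0)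
    finally show ?thesis .
  qed
  obtain j where j: "j < length L" "L ! j = 1" using S1 Ls by (metis in_set_conv_nth)
  have jk: "k \<le> j"
  proof (rule ccontr)
    assume "\<not> k \<le> j"
    hence "L ! j \<in> A" unfolding A_def using j by (auto simp: in_set_conv_nth intro!: exI[of _ j])
    thus False using outA j by simp
  qed
  have W1: "W 1 \<le> W (L ! k)"
  proof (cases "k = j")
    case True then show ?thesis using j by simp
  next
    case False
    hence "k < j" using jk by simp
    from sorted_wrt_nth_less[OF Lsort this j(1)] show ?thesis using j by simp
  qed
  have "M \<le> (\<Sum>i\<in>A. real (W i)) - real k * real (W (L ! k))" using cond sumA by simp
  also have "\<dots> \<le> Zv A W" unfolding Zv_def cardA using W1
    by (simp add: mult_left_mono)
  finally have "M \<le> Zv A W" .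
  moreover have "A \<subseteq> S - {1}" using outA Ls unfolding A_def by (auto dest: in_set_takeD)
  moreover have "A \<noteq> {}" using cardA k1 by auto
  ultimately show ?thesis by blast
qed

lemma measure_bind_pmf_spmf:
  "measure (measure_spmf (bind_pmf P h)) X = measure_pmf.expectation P (\<lambda>x. measure (measure_spmf (h x)) X)"
  unfolding measure_spmf_bind_pmf
  by (subst measure_pmf.measure_bind[where N="count_space UNIV"])
     (auto simp: measure_spmf_in_space_subprob_algebra)

lemma pmf_choice:
  assumes f: "in_Mp_ranking K p f id" and S: "S \<in> display_sets K"
  shows "pmf (choice_pmf f S) x = (if x \<in> S then f x S else 0)"
proof -
  note F = Mp_facts[OF f S]
  have nn: "\<And>i. 0 \<le> (if i \<in> S then f i S else 0)" using F(1) by (simp add: less_imp_le)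
  have "(\<integral>\<^sup>+ i. ennreal (if i \<in> S then f i S else 0) \<partial>count_space UNIV) = (\<Sum>i\<in>S. ennreal (if i \<in> S then f i S else 0))"
    using F(4) by (intro nn_integral_count_space') auto
  also have "\<dots> = ennreal (\<Sum>i\<in>S. (if i \<in> S then f i S else 0))"
    using nn by (intro sum_ennreal) meson
  also have "(\<Sum>i\<in>S. (if i \<in> S then f i S else 0)) = 1" using F(2) by simp
  finally show ?thesis unfolding choice_pmf_def using nn by (subst pmf_embed_pmf) auto
qed

definition fam :: "nat \<Rightarrow> nat set set" where
  "fam K = {A. A \<subseteq> {2..K} \<and> A \<noteq> {}}"

definition Psi :: "nat \<Rightarrow> real \<Rightarrow> real \<Rightarrow> (nat \<Rightarrow> nat) \<Rightarrow> real" where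
  "Psi K p M W = (\<Sum>A\<in>fam K. p powr (M - Zv A W))"

definition Phi :: "nat \<Rightarrow> real \<Rightarrow> real \<Rightarrow> (nat \<Rightarrow> nat) \<Rightarrow> nat set \<Rightarrow> real" where
  "Phi K p M W S = (if 1 \<in> S then Psi K p M W else 1)"

lemma fam_finite: "finite (fam K)"
  unfolding fam_def by (rule finite_subset[of _ "Pow {2..K}"]) auto

lemma Psi_nonneg: "0 \<le> Psi K p M W"
  unfolding Psi_def by (intro sum_nonneg) auto

lemma Phi_nonneg: "0 \<le> Phi K p M W S"
  unfolding Phi_def using Psi_nonneg by simp

lemma Psi_ge1:
  assumes "A \<in> fam K" "M \<le> Zv A W" "0 < p" "p < 1"
  shows "1 \<le> Psi K p M W"
proof -
  have "1 = p powr 0" using assms by simp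
  also have "\<dots> \<le> p powr (M - Zv A W)" using assms by (intro powr_mono') auto
  also have "\<dots> \<le> Psi K p M W" unfolding Psi_def
    using assms fam_finite by (intro member_le_sum) auto
  finally show ?thesis .
qed

lemma upd_sub:
  assumes "valid_tiebreak rk" "finite S"
  shows "ne_update M rk W S \<subseteq> S"
proof -
  have "set (rk W S) = S" using assms unfolding valid_tiebreak_def by auto
  thus ?thesis unfolding ne_update_def Let_def by (auto dest: in_set_takeD)
qed

lemma main_bound:
  assumes p: "0 < p" "p < 1" and f: "in_Mp_ranking K p f id" and vt: "valid_tiebreak rk"
  shows "\<forall>W S. S \<subseteq> {1..K} \<longrightarrow> measure (measure_spmf (ne_run M rk f W S)) {i. i \<noteq> 1} \<le> Phi K p M W S"
proof (rule ne_run.fixp_induct)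
  show "spmf.admissible (\<lambda>g. \<forall>W S. S \<subseteq> {1..K} \<longrightarrow> measure (measure_spmf (curry (curry (curry (curry g))) M rk f W S)) {i. i \<noteq> 1} \<le> Phi K p M W S)"
    by (simp add: curry_def) (intro admissible_all admissible_imp adm_measure_le admissible_const)
  show "\<forall>W S. S \<subseteq> {1..K} \<longrightarrow> measure (measure_spmf ((\<lambda>ne_run M rk f W. return_pmf None) M rk f W S)) {i. i \<noteq> 1} \<le> Phi K p M W S"
    using Phi_nonneg by simp
next
  fix g :: "real \<Rightarrow> ((nat \<Rightarrow> nat) \<Rightarrow> nat set \<Rightarrow> nat list) \<Rightarrow> (nat \<Rightarrow> nat set \<Rightarrow> real) \<Rightarrow> (nat \<Rightarrow> nat) \<Rightarrow> nat set \<Rightarrow> nat spmf"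
  assume IH: "\<forall>W S. S \<subseteq> {1..K} \<longrightarrow> measure (measure_spmf (g M rk f W S)) {i. i \<noteq> 1} \<le> Phi K p M W S"
  show "\<forall>W S. S \<subseteq> {1..K} \<longrightarrow> measure (measure_spmf ((\<lambda>a b c d e.
            if card e \<le> 1 then return_spmf (the_elem e)
            else bind_spmf (spmf_of_pmf (choice_pmf c e))
                 (\<lambda>x. let W' = d(x := Suc (d x))
                      in g a b c W' (ne_update a b W' e))) M rk f W S)) {i. i \<noteq> 1} \<le> Phi K p M W S"
  proof (intro allI impI)
    fix W :: "nat \<Rightarrow> nat" and S :: "nat set"
    assume Ssub: "S \<subseteq> {1..K}"
    have finS: "finite S" using Ssub finite_subset by blast
    show "measure (measure_spmf ((\<lambda>a b c d e.
            if card e \<le> 1 then return_spmf (the_elem e)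
            else bind_spmf (spmf_of_pmf (choice_pmf c e))
                 (\<lambda>x. let W' = d(x := Suc (d x))
                      in g a b c W' (ne_update a b W' e))) M rk f W S)) {i. i \<noteq> 1} \<le> Phi K p M W S"
    proof (cases "1 \<in> S")
      case False
      thus ?thesis by (simp add: Phi_def measure_spmf.subprob_measure_le_1)
    next
      case S1: True
      show ?thesis
      proof (cases "card S \<le> 1")
        case True
        have "card S = 1" using True S1 finS by (metis card_0_eq empty_iff le_antisym less_one not_le)
        then obtain y where "S = {y}" by (rule card_1_singletonE)
        hence Seq: "S = {1}" using S1 by simp
        show ?thesis using True Phi_nonneg[of K p M W S]
          by (simp add: Seq measure_measure_spmf_conv_measure_pmf indicator_def image_iff)
      next
        case False
        have Sd: "S \<in> display_sets K" using False Ssub unfolding display_sets_def by auto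
        define h where "h x = g M rk f (W(x := Suc (W x))) (ne_update M rk (W(x := Suc (W x))) S)" for x
        have "measure (measure_spmf ((\<lambda>a b c d e.
            if card e \<le> 1 then return_spmf (the_elem e)
            else bind_spmf (spmf_of_pmf (choice_pmf c e))
                 (\<lambda>x. let W' = d(x := Suc (d x))
                      in g a b c W' (ne_update a b W' e))) M rk f W S)) {i. i \<noteq> 1}
           = measure_pmf.expectation (choice_pmf f S) (\<lambda>x. measure (measure_spmf (h x)) {i. i \<noteq> 1})"
          using False by (simp add: h_def Let_def measure_bind_pmf_spmf)
        also have "\<dots> = (\<Sum>x\<in>S. pmf (choice_pmf f S) x *\<^sub>R measure (measure_spmf (h x)) {i. i \<noteq> 1})"
          using finS by (intro integral_measure_pmf) (auto simp: set_pmf_iff pmf_choice[OF f Sd] split: if_splits)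
        also have "\<dots> \<le> (\<Sum>x\<in>S. f x S * Psi K p M (W(x := Suc (W x))))"
        proof (intro sum_mono)
          fix x assume xS: "x \<in> S"
          define W' where "W' = W(x := Suc (W x))"
          have f0: "0 \<le> f x S" using Mp_facts(1)[OF f Sd xS] by simp
          have usub: "ne_update M rk W' S \<subseteq> S" by (rule upd_sub[OF vt finS])
          have "measure (measure_spmf (h x)) {i. i \<noteq> 1} \<le> Phi K p M W' (ne_update M rk W' S)"
            using IH usub Ssub unfolding h_def W'_def by blast
          also have "\<dots> \<le> Psi K p M W'"
          proof (cases "1 \<in> ne_update M rk W' S")
            case True thus ?thesis by (simp add: Phi_def)
          next
            case False
            obtain A where A: "A \<subseteq> S - {1}" "A \<noteq> {}" "M \<le> Zv A W'"
              using elim_lemma[OF vt finS S1 False] by blast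
            have "A \<in> fam K" using A Ssub unfolding fam_def by force
            thus ?thesis using False Psi_ge1[OF _ A(3) p] by (simp add: Phi_def)
          qed
          finally show "pmf (choice_pmf f S) x *\<^sub>R measure (measure_spmf (h x)) {i. i \<noteq> 1}
              \<le> f x S * Psi K p M (W(x := Suc (W x)))"
            using xS f0 by (simp add: pmf_choice[OF f Sd] W'_def mult_left_mono)
        qed
        also have "\<dots> = (\<Sum>A\<in>fam K. \<Sum>x\<in>S. f x S * p powr (M - Zv A (W(x := Suc (W x)))))"
          unfolding Psi_def by (simp add: sum_distrib_left sum.swap[of _ S])
        also have "\<dots> \<le> (\<Sum>A\<in>fam K. p powr (M - Zv A W))"
          by (intro sum_mono step_ineq[OF p Sd S1 f]) (auto simp: fam_def)
        also have "\<dots> = Phi K p M W S" using S1 by (simp add: Phi_def Psi_def)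
        finally show ?thesis .
      qed
    qed
  qed
qed

lemma card_fam: "card (fam K) = 2 ^ (K - 1) - 1"
proof -
  have "fam K = Pow {2..K} - {{}}" unfolding fam_def by auto
  hence "card (fam K) = card (Pow {2..K}) - 1" by (simp add: card_Diff_singleton)
  also have "\<dots> = 2 ^ (K - 1) - 1" by (simp add: card_Pow)
  finally show ?thesis .
qed

theorem mainTheorem3:
  fixes K :: nat and p M :: real
    and f :: "nat \<Rightarrow> nat set \<Rightarrow> real"
    and rk :: "(nat \<Rightarrow> nat) \<Rightarrow> nat set \<Rightarrow> nat list"
  assumes "K \<ge> 2" and "0 < p" and "p < 1" and "M > 0"
    and "in_Mp K p f" and "in_Mp_ranking K p f id"
    and "valid_tiebreak rk"
  shows "measure (measure_spmf (NE_output M rk f K)) {i. i \<noteq> 1}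
           \<le> (2 ^ (K - 1) - 1) * p powr M"
proof -
  have "measure (measure_spmf (NE_output M rk f K)) {i. i \<noteq> 1} \<le> Phi K p M (\<lambda>_. 0) {1..K}"
    unfolding NE_output_def using main_bound[OF assms(2,3,6,7), of M] by blast
  also have "\<dots> = (\<Sum>A\<in>fam K. p powr M)"
    using assms(1) by (simp add: Phi_def Psi_def Zv_def)
  also have "\<dots> = real (2 ^ (K - 1) - 1) * p powr M" by (simp add: card_fam)
  also have "real (2 ^ (K - 1) - 1 :: nat) = 2 ^ (K - 1) - 1"
    by (simp add: of_nat_diff)
  finally show ?thesis .
qed

end
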